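(* Let $G$ be a non-abelian subgroup of $\mathcal{H}(n,\mathbb{C})$ with $\Lambda_G\not\subset\mathbb{R}$ and $G\not\subset\mathcal{SR}_n$. Then $G$ has no discrete orbit, i.e. for every $z\in\mathbb{C}^n$ the orbit $G(z)$ is not a discrete subset of $\mathbb{C}^n$.
   Context: $\mathcal{H}(n,\mathbb{C})$ is the group of all maps $z\mapsto\lambda z+b$ of $\mathbb{C}^n$ with $\lambda\in\mathbb{C}^*$, $b\in\mathbb{C}^n$ ($\lambda$ = ratio). $H_2=(\frac{\pi}{2}+\pi\mathbb{Z})\cup\pi\mathbb{Z}$, $F_2=\{e^{ix}:x\in H_2\}$, $H_3=(\frac{\pi}{3}+\pi\mathbb{Z})\cup(-\frac{\pi}{3}+\pi\mathbb{Z})\cup\pi\mathbb{Z}$, $F_3=\{e^{ix}:x\in H_3\}$; $\mathcal{S}_i\mathcal{R}_n=\{z\mapsto\lambda z+b:\lambda\in F_i, b\in\mathbb{C}^n\}$, $\mathcal{SR}_n=\mathcal{S}_2\mathcal{R}_n\cup\mathcal{S}_3\mathcal{R}_n$. $\Lambda_G$ is the set of ratios of elements of $G$, and $G(z)=\{f(z):f\in G\}$. *)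

theory Defs
  imports "HOL-Analysis.Analysis"
begin

definition affine_map :: "complex \<Rightarrow> complex ^ 'n \<Rightarrow> (complex ^ 'n \<Rightarrow> complex ^ 'n)" where
  "affine_map lam b = (\<lambda>z. lam *s z + b)"

definition Hgrp :: "(complex ^ 'n \<Rightarrow> complex ^ 'n) set" where
  "Hgrp = {affine_map lam b | lam b. lam \<noteq> 0}"

definition is_subgroup_H :: "(complex ^ 'n \<Rightarrow> complex ^ 'n) set \<Rightarrow> bool" where
  "is_subgroup_H G \<longleftrightarrow> G \<subseteq> Hgrp \<and> id \<in> G \<and> (\<forall>f\<in>G. \<forall>g\<in>G. f \<circ> g \<in> G)
      \<and> (\<forall>f\<in>G. \<exists>g\<in>G. f \<circ> g = id \<and> g \<circ> f = id)"

definition ratios :: "(complex ^ 'n \<Rightarrow> complex ^ 'n) set \<Rightarrow> complex set" where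
  "ratios G = {lam. \<exists>b. affine_map lam b \<in> G}"

definition H2 :: "real set" where
  "H2 = {pi/2 + pi * of_int k | k. True} \<union> {pi * of_int k | k. True}"

definition H3 :: "real set" where
  "H3 = {pi/3 + pi * of_int k | k. True} \<union> {- pi/3 + pi * of_int k | k. True}
        \<union> {pi * of_int k | k. True}"

definition F2 :: "complex set" where
  "F2 = {exp (\<i> * of_real x) | x. x \<in> H2}"

definition F3 :: "complex set" where
  "F3 = {exp (\<i> * of_real x) | x. x \<in> H3}"

definition S2R :: "(complex ^ 'n \<Rightarrow> complex ^ 'n) set" where
  "S2R = {affine_map lam b | lam b. lam \<in> F2}"

definition S3R :: "(complex ^ 'n \<Rightarrow> complex ^ 'n) set" where
  "S3R = {affine_map lam b | lam b. lam \<in> F3}"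

definition SR :: "(complex ^ 'n \<Rightarrow> complex ^ 'n) set" where
  "SR = S2R \<union> S3R"

definition orbit :: "(complex ^ 'n \<Rightarrow> complex ^ 'n) set \<Rightarrow> complex ^ 'n \<Rightarrow> (complex ^ 'n) set" where
  "orbit G z = {f z | f. f \<in> G}"

end

theory Submission
  imports Defs
begin

lemma am_comp: "affine_map a b \<circ> affine_map c d = affine_map (a*c) (a *s d + b)"
  by (rule ext) (simp add: affine_map_def vector_add_ldistrib scalar_mult_eq_scaleR algebra_simps vec_eq_iff)

lemma am_id: "id = affine_map 1 0"
  by (rule ext) (simp add: affine_map_def)

lemma am_inj: assumes "affine_map a b = affine_map c d" shows "a = c \<and> b = d"
proof -
  have "affine_map a b 0 = affine_map c d 0" using assms by simp
  hence bd: "b = d" by (simp add: affine_map_def)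
  have "affine_map a b (\<chi> i. 1) $ undefined = affine_map c d (\<chi> i. 1) $ undefined" using assms by simp
  hence "a = c" using bd by (simp add: affine_map_def)
  thus ?thesis using bd by simp
qed

lemma F2I: assumes "x \<in> H2" "Complex (cos x) (sin x) = w" shows "w \<in> F2"
proof -
  have "exp (\<i> * of_real x) = w" using assms(2) by (simp add: cis_conv_exp[symmetric] cis.ctr)
  thus ?thesis using assms(1) unfolding F2_def by blast
qed

lemma F3I: assumes "x \<in> H3" "Complex (cos x) (sin x) = w" shows "w \<in> F3"
proof -
  have "exp (\<i> * of_real x) = w" using assms(2) by (simp add: cis_conv_exp[symmetric] cis.ctr)
  thus ?thesis using assms(1) unfolding F3_def by blast
qed

lemma F2_vals: "1 \<in> F2" "-1 \<in> F2" "\<i> \<in> F2" "-\<i> \<in> F2"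
  apply (rule F2I[of "pi * of_int 0"]) apply (unfold H2_def, blast) apply (simp add: complex_eq_iff)
  apply (rule F2I[of "pi * of_int 1"]) apply (unfold H2_def, blast) apply (simp add: complex_eq_iff)
  apply (rule F2I[of "pi/2 + pi * of_int 0"]) apply (unfold H2_def, blast) apply (simp add: complex_eq_iff)
  apply (rule F2I[of "pi/2 + pi * of_int (-1)"]) apply (unfold H2_def, blast) apply (simp add: complex_eq_iff cos_diff sin_diff)
  done

lemma F3_vals: "Complex (1/2) (sqrt 3/2) \<in> F3" "Complex (1/2) (-sqrt 3/2) \<in> F3"
  "Complex (-1/2) (sqrt 3/2) \<in> F3" "Complex (-1/2) (-sqrt 3/2) \<in> F3"
  apply (rule F3I[of "pi/3 + pi * of_int 0"]) apply (unfold H3_def, blast) apply (simp add: sin_60 cos_60)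
  apply (rule F3I[of "-pi/3 + pi * of_int 0"]) apply (unfold H3_def, blast) apply (simp add: sin_60 cos_60)
  apply (rule F3I[of "-pi/3 + pi * of_int 1"]) apply (unfold H3_def, blast) apply (simp only: sin_add cos_add, simp add: sin_60 cos_60)
  apply (rule F3I[of "pi/3 + pi * of_int 1"]) apply (unfold H3_def, blast) apply (simp only: sin_add cos_add, simp add: sin_60 cos_60)
  done

lemma nsq: "cmod z < 1 \<longleftrightarrow> (Re z)^2 + (Im z)^2 < 1"
  by (simp add: cmod_def)

lemma small_factor:
  assumes "\<mu> \<noteq> 0" "\<mu> \<notin> F2" "\<mu> \<notin> F3"
  shows "\<exists>q. q \<noteq> 0 \<and> cmod q < 1 \<and> (q = \<mu> \<or> q = inverse \<mu> \<or> q = \<mu> - 1 \<or> q = \<mu> + 1 \<or> q = \<mu>*\<mu> + 1)"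
proof (cases "cmod \<mu> = 1")
  case False
  show ?thesis
  proof (cases "cmod \<mu> < 1")
    case True thus ?thesis using assms by blast
  next
    case False
    hence "cmod (inverse \<mu>) < 1" using \<open>cmod \<mu> \<noteq> 1\<close> by (simp add: norm_inverse inverse_less_1_iff)
    thus ?thesis using assms by (intro exI[of _ "inverse \<mu>"]) auto
  qed
next
  case True
  obtain a b where ab: "\<mu> = Complex a b" by (metis complex.exhaust)
  have c: "a^2 + b^2 = 1" using True ab by (simp add: cmod_def)
  consider "a > 1/2" | "a < -1/2" | "0 < \<bar>a\<bar> \<and> \<bar>a\<bar> < 1/2" | "a = 0" | "a = 1/2" | "a = -1/2" by linarith
  thus ?thesis
  proof cases
    case 1
    have "\<mu> \<noteq> 1" using assms(2) F2_vals(1) by metis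
    moreover have "cmod (\<mu> - 1) < 1" using 1 c ab by (simp add: nsq power2_eq_square algebra_simps)
    ultimately show ?thesis by (intro exI[of _ "\<mu> - 1"]) auto
  next
    case 2
    have "\<mu> \<noteq> -1" using assms(2) F2_vals(2) by metis
    hence "\<mu> + 1 \<noteq> 0" by (auto simp: add_eq_0_iff2)
    moreover have "cmod (\<mu> + 1) < 1" using 2 c ab by (simp add: nsq power2_eq_square algebra_simps)
    ultimately show ?thesis by (intro exI[of _ "\<mu> + 1"]) auto
  next
    case 3
    have e: "\<mu>*\<mu> + 1 = Complex (2*a*a) (2*a*b)" using ab c by (simp add: complex_eq_iff power2_eq_square algebra_simps)
    have "(2*a*a)^2 + (2*a*b)^2 = 4*a^2*(a^2+b^2)" by (simp add: power2_eq_square algebra_simps)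
    also have "\<dots> = 4*a^2" using c by simp
    also have "\<dots> < 1"
    proof -
      have "\<bar>a\<bar>^2 < (1/2)^2" using 3 by (intro power_strict_mono) auto
      thus ?thesis by (simp add: power2_eq_square)
    qed
    finally have "cmod (\<mu>*\<mu> + 1) < 1" unfolding e nsq by simp
    moreover have "\<mu>*\<mu> + 1 \<noteq> 0" using 3 e by (auto simp: complex_eq_iff)
    ultimately show ?thesis by blast
  next
    case 4
    hence "b = 1 \<or> b = -1" using c by (simp add: power2_eq_1_iff)
    hence "\<mu> = \<i> \<or> \<mu> = -\<i>" using ab 4 by (auto simp: complex_eq_iff)
    thus ?thesis using assms(2) F2_vals(3,4) by metis
  next
    case 5
    have "a^2 = 1/4" unfolding 5 by (simp add: power2_eq_square)
    hence "b^2 = 3/4" using c by linarith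
    hence "b^2 = (sqrt 3/2)^2" by (simp add: power_divide)
    hence "b = sqrt 3/2 \<or> b = - (sqrt 3/2)" by (simp add: power2_eq_iff)
    hence "\<mu> = Complex (1/2) (sqrt 3/2) \<or> \<mu> = Complex (1/2) (-sqrt 3/2)" using ab 5 by auto
    thus ?thesis using assms(3) F3_vals(1,2) by metis
  next
    case 6
    have "a^2 = 1/4" unfolding 6 by (simp add: power2_eq_square)
    hence "b^2 = 3/4" using c by linarith
    hence "b^2 = (sqrt 3/2)^2" by (simp add: power_divide)
    hence "b = sqrt 3/2 \<or> b = - (sqrt 3/2)" by (simp add: power2_eq_iff)
    hence "\<mu> = Complex (-1/2) (sqrt 3/2) \<or> \<mu> = Complex (-1/2) (-sqrt 3/2)" using ab 6 by auto
    thus ?thesis using assms(3) F3_vals(3,4) by metis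
  qed
qed

lemma norm_smult_vec: "norm (c *s (v :: complex ^ 'n)) = cmod c * norm v"
  unfolding norm_vec_def by (simp add: L2_set_right_distrib norm_mult)

theorem corollary1p3:
  fixes G :: "(complex ^ 'n \<Rightarrow> complex ^ 'n) set"
  assumes "is_subgroup_H G"
    and "\<exists>f\<in>G. \<exists>g\<in>G. f \<circ> g \<noteq> g \<circ> f"
    and "\<not> ratios G \<subseteq> \<real>"
    and "\<not> G \<subseteq> SR"
  shows "\<forall>z. \<not> discrete (orbit G z)"
proof -
  have GH: "G \<subseteq> Hgrp" and idG: "id \<in> G" and cl: "\<And>f g. f \<in> G \<Longrightarrow> g \<in> G \<Longrightarrow> f \<circ> g \<in> G"
    and iv: "\<And>f. f \<in> G \<Longrightarrow> \<exists>g\<in>G. f \<circ> g = id \<and> g \<circ> f = id"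
    using assms(1) unfolding is_subgroup_H_def by auto
  have memH: "\<exists>lam b. lam \<noteq> 0 \<and> f = affine_map lam b" if "f \<in> G" for f
    using that GH unfolding Hgrp_def by blast
  have inv: "\<exists>a' b'. affine_map a' b' \<in> G \<and> a * a' = 1 \<and> a *s b' + b = 0"
    if am: "affine_map a b \<in> G" for a b
  proof -
    obtain g where g: "g \<in> G" "affine_map a b \<circ> g = id" using iv[OF am] by blast
    obtain a' b' where gg: "g = affine_map a' b'" using memH[OF g(1)] by blast
    have "affine_map (a*a') (a *s b' + b) = affine_map 1 0" using g(2) unfolding gg am_comp am_id .
    hence "a*a' = 1 \<and> a *s b' + b = 0" by (rule am_inj)
    thus ?thesis using g(1) gg by blast
  qed
  obtain f g where fg: "f \<in> G" "g \<in> G" "f \<circ> g \<noteq> g \<circ> f" using assms(2) by blast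
  obtain a b where ab: "f = affine_map a b" using memH[OF fg(1)] by blast
  obtain c d where cd: "g = affine_map c d" using memH[OF fg(2)] by blast
  define v where "v = (a *s d + b) - (c *s b + d)"
  have fg1: "f \<circ> g = affine_map (a*c) (a *s d + b)" unfolding ab cd am_comp ..
  have fg2: "g \<circ> f = affine_map (a*c) (c *s b + d)" unfolding ab cd am_comp by (simp add: mult.commute)
  have v0: "v \<noteq> 0" using fg(3) unfolding fg1 fg2 v_def by (metis right_minus_eq)
  obtain a' b' where ab': "affine_map a' b' \<in> G" "(a*c) * a' = 1" "(a*c) *s b' + (c *s b + d) = 0"
    using inv[of "a*c" "c *s b + d"] cl[OF fg(2,1)] fg2 by auto
  have "(f \<circ> g) \<circ> affine_map a' b' = affine_map 1 v"
  proof -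
    have x: "(a*c) *s b' = - (c *s b + d)" using ab'(3) by (simp only: eq_neg_iff_add_eq_0)
    have "(a*c) *s b' + (a *s d + b) = v" unfolding x v_def by simp
    thus ?thesis unfolding fg1 am_comp using ab'(2) by simp
  qed
  hence vG: "affine_map 1 v \<in> G" using cl[OF cl[OF fg(1,2)] ab'(1)] by simp
  define M where "M = {x. affine_map 1 (x *s v) \<in> G}"
  have M1: "1 \<in> M" using vG unfolding M_def by simp
  have Madd: "x + y \<in> M" if "x \<in> M" "y \<in> M" for x y
  proof -
    have "affine_map 1 (x *s v) \<circ> affine_map 1 (y *s v) = affine_map 1 ((x+y) *s v)"
      unfolding am_comp by (simp add: vector_sadd_rdistrib add.commute)
    thus ?thesis using cl[of "affine_map 1 (x *s v)" "affine_map 1 (y *s v)"] that unfolding M_def by simp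
  qed
  have Mneg: "- x \<in> M" if xM: "x \<in> M" for x
  proof -
    obtain a2 b2 where i2: "affine_map a2 b2 \<in> G" "1 * a2 = 1" "1 *s b2 + x *s v = 0"
      using inv[of 1 "x *s v"] xM unfolding M_def by auto
    have "a2 = 1" using i2(2) by simp
    moreover have "b2 = (-x) *s v"
    proof -
      have "b2 + x *s v = 0" using i2(3) by simp
      hence "b2$i = (-x) * v$i" for i by (simp add: vec_eq_iff) (metis add_eq_0_iff2 mult_minus_left)
      thus ?thesis by (simp add: vec_eq_iff)
    qed
    ultimately have "affine_map 1 ((-x) *s v) \<in> G" using i2(1) by simp
    thus ?thesis unfolding M_def by simp
  qed
  have Mmul: "mu * x \<in> M" if hm: "affine_map mu bb \<in> G" and xM: "x \<in> M" for mu bb x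
  proof -
    obtain a2 b2 where i2: "affine_map a2 b2 \<in> G" "mu * a2 = 1" "mu *s b2 + bb = 0"
      using inv[OF hm] by auto
    have "(affine_map mu bb \<circ> affine_map 1 (x *s v)) \<circ> affine_map a2 b2 = affine_map 1 ((mu*x) *s v)"
    proof -
      have c: "mu * b2$i + bb$i = 0" for i using i2(3) by (simp add: vec_eq_iff)
      have e: "mu *s b2 + (mu *s (x *s v) + bb) = (mu*x) *s v"
      proof (subst vec_eq_iff, intro allI)
        fix i
        have "mu * (b2$i) + (mu * (x * (v$i)) + (bb$i)) = (mu * (b2$i) + (bb$i)) + mu * x * (v$i)" by (simp add: algebra_simps)
        thus "(mu *s b2 + (mu *s (x *s v) + bb))$i = ((mu*x) *s v)$i" using c[of i] by simp
      qed
      show ?thesis unfolding am_comp mult_1_right i2(2) e ..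
    qed
    moreover have "(affine_map mu bb \<circ> affine_map 1 (x *s v)) \<circ> affine_map a2 b2 \<in> G"
      using cl[OF cl[OF hm] i2(1)] xM unfolding M_def by simp
    ultimately show ?thesis unfolding M_def by simp
  qed
  obtain h where h: "h \<in> G" "h \<notin> SR" using assms(4) by blast
  obtain mu bb where mu: "mu \<noteq> 0" "h = affine_map mu bb" using memH[OF h(1)] by blast
  have muF: "mu \<notin> F2" "mu \<notin> F3" using h(2) unfolding mu(2) SR_def S2R_def S3R_def by auto
  obtain mu' bb' where mu': "affine_map mu' bb' \<in> G" "mu * mu' = 1"
    using inv[of mu bb] h(1) mu(2) by auto
  have "mu' = inverse mu" using mu'(2) by (simp add: field_simps mu(1))
  obtain q where q: "q \<noteq> 0" "cmod q < 1"
    "q = mu \<or> q = inverse mu \<or> q = mu - 1 \<or> q = mu + 1 \<or> q = mu*mu + 1"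
    using small_factor[OF mu(1) muF] by blast
  have hmu: "affine_map mu bb \<in> G" using h(1) mu(2) by simp
  have Mq: "q * x \<in> M" if "x \<in> M" for x
  proof -
    have A: "mu * x \<in> M" using Mmul[OF hmu that] .
    have B: "inverse mu * x \<in> M" using Mmul[OF mu'(1) that] \<open>mu' = inverse mu\<close> by simp
    have C: "mu * (mu * x) \<in> M" using Mmul[OF hmu A] .
    show ?thesis using q(3)
    proof (elim disjE)
      assume qe: "q = mu - 1"
      have "q * x = mu * x + - x" unfolding qe by (simp add: algebra_simps)
      thus ?thesis using Madd[OF A Mneg[OF that]] by simp
    next
      assume qe: "q = mu + 1"
      have "q * x = mu * x + x" unfolding qe by (simp add: algebra_simps)
      thus ?thesis using Madd[OF A that] by simp
    next
      assume qe: "q = mu*mu + 1"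
      have "q * x = mu * (mu * x) + x" unfolding qe by (simp add: algebra_simps)
      thus ?thesis using Madd[OF C that] by simp
    qed (use A B in auto)
  qed
  have Mpow: "q ^ k \<in> M" for k
    by (induction k) (use M1 Mq in auto)
  show ?thesis
  proof (intro allI notI)
    fix z assume disc: "discrete (orbit G z)"
    have zin: "z \<in> orbit G z" unfolding orbit_def using idG by (metis (mono_tags, lifting) id_apply mem_Collect_eq)
    hence "z isolated_in orbit G z" using disc by (rule discreteD[rotated])
    then obtain e where e: "e > 0" "\<forall>y\<in>orbit G z. dist z y < e \<longrightarrow> y = z"
      unfolding isolated_in_dist_Ex_iff by blast
    have nv: "norm v > 0" using v0 by simp
    obtain k where k: "cmod q ^ k < e / norm v" using real_arch_pow_inv[OF _ q(2), of "e / norm v"] e(1) nv by auto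
    define y where "y = affine_map 1 (q^k *s v) z"
    have yin: "y \<in> orbit G z" using Mpow[of k] unfolding M_def orbit_def y_def by blast
    have yz: "y = z + q^k *s v" unfolding y_def affine_map_def by simp
    have "dist z y = cmod q ^ k * norm v" unfolding yz dist_norm by (simp add: norm_smult_vec norm_power)
    also have "\<dots> < e" using k nv by (simp add: pos_less_divide_eq)
    finally have "y = z" using e(2) yin by blast
    moreover have "q^k *s v \<noteq> 0"
    proof
      assume "q^k *s v = 0"
      hence "cmod q ^ k * norm v = 0" by (metis norm_smult_vec norm_power norm_zero)
      thus False using q(1) nv by simp
    qed
    ultimately show False using yz by simp
  qed
qed
end
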